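(* Let $\alpha\in(0,1)$ and let the index set $\mathcal I$ be either $\{1,\dots,n\}$ for some $n\in\mathbb N$ or $\mathbb N=\{1,2,\dots\}$. Let $(p_i)_{i\in\mathcal I}$ be independent random variables taking values in $[0,1]$ such that $\mathbb P(p_i\le t)\le t$ for all $t\in[0,1]$ and all $i\in\mathcal I$. Let $u_\alpha(k)$ be either the linear boundary $$u_\alpha(k)=\sqrt{\frac{-\log\alpha}{2m}}\,k+\sqrt{\frac{-m\log\alpha}{2}}$$ for an arbitrary fixed $m>0$, or the curved boundary $$u_\alpha(k)=1.7\sqrt{k\left(\log\log(2k)+0.72\log\frac{5.2}{\alpha}\right)}.$$ Then $$\mathbb P\Big(\exists k\in\mathcal I:\ \sum_{i=1}^k\Phi^{-1}(1-p_i)\ge u_\alpha(k)\Big)\le\alpha,$$ i.e. the martingale Stouffer test, which rejects the global null when this event occurs, controls the type-I error at level $\alpha$.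
   Context: $\Phi$ denotes the standard Gaussian cumulative distribution function. The condition $\mathbb P(p_i\le t)\le t$ means that each $p_i$ is stochastically larger than a uniform random variable on $[0,1]$ (this is the situation under the global null hypothesis). *)

theory Defs
  imports "HOL-Probability.Probability"
begin

definition Phi :: "real \<Rightarrow> real" where
  "Phi x = measure (density lborel std_normal_density) {..x}"

definition Phi_inv :: "real \<Rightarrow> ereal" where
  "Phi_inv q = (if q \<le> 0 then -\<infinity> else if 1 \<le> q then \<infinity>
                else ereal (THE x. Phi x = q))"

definition u_linear :: "real \<Rightarrow> real \<Rightarrow> nat \<Rightarrow> real" where
  "u_linear \<alpha> m k = sqrt (- ln \<alpha> / (2 * m)) * real k + sqrt (- m * ln \<alpha> / 2)"

definition u_curved :: "real \<Rightarrow> nat \<Rightarrow> real" where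
  "u_curved \<alpha> k = 1.7 * sqrt (real k * (ln (ln (2 * real k)) + 0.72 * ln (5.2 / \<alpha>)))"

end

theory Submission
  imports Defs
begin

abbreviation NN :: "real measure" where "NN \<equiv> std_normal_distribution"

interpretation NN: real_distribution NN
  by (rule real_dist_normal_dist)

lemma Phi_cdf: "Phi = cdf NN"
  by (simp add: Phi_def fun_eq_iff cdf_def)

lemma Phi_bounds: "0 \<le> Phi x" "Phi x \<le> 1"
  unfolding Phi_cdf by (simp_all add: NN.cdf_bounded_prob NN.cdf_nonneg)

lemma Phi_compl: "1 - Phi t = measure NN {t<..}"
proof -
  have "measure NN {t<..} = measure NN (UNIV - {..t})"
    by (rule arg_cong[where f="measure NN"]) auto
  also have "\<dots> = 1 - measure NN {..t}"
    using NN.prob_compl[of "{..t}"] by simp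
  finally show ?thesis by (simp add: Phi_def)
qed

lemma Phi_cont: "isCont Phi x"
proof -
  have ae: "AE z in lborel. ennreal (std_normal_density z) * indicator {x} z = 0"
    using AE_lborel_singleton[of x] by eventually_elim auto
  have "emeasure NN {x} = (\<integral>\<^sup>+ z. ennreal (std_normal_density z) * indicator {x} z \<partial>lborel)"
    by (subst emeasure_density) auto
  also have "\<dots> = 0"
    using ae by (subst nn_integral_0_iff_AE) auto
  finally have "measure NN {x} = 0" by (simp add: measure_def)
  then show ?thesis unfolding Phi_cdf by (simp add: NN.isCont_cdf)
qed

lemma Phi_strict: assumes "x < y" shows "Phi x < Phi y"
proof -
  define c where "c = (1 / sqrt (2 * pi)) * exp (- (\<bar>x\<bar> + \<bar>y\<bar>)\<^sup>2 / 2)"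
  have cpos: "0 < c" by (simp add: c_def)
  have lb: "c \<le> std_normal_density z" if "z \<in> {x<..y}" for z
  proof -
    have "\<bar>z\<bar> \<le> \<bar>x\<bar> + \<bar>y\<bar>" using that by auto
    then have "z\<^sup>2 \<le> (\<bar>x\<bar> + \<bar>y\<bar>)\<^sup>2"
      by (metis abs_ge_zero power2_abs power_mono)
    then have "exp (- (\<bar>x\<bar> + \<bar>y\<bar>)\<^sup>2 / 2) \<le> exp (- z\<^sup>2 / 2)" by simp
    then show ?thesis unfolding c_def std_normal_density_def
      by (intro mult_left_mono) auto
  qed
  have "ennreal (c * (y - x)) = (\<integral>\<^sup>+ z. ennreal c * indicator {x<..y} z \<partial>lborel)"
    using assms cpos by (simp add: nn_integral_cmult ennreal_mult)
  also have "\<dots> \<le> (\<integral>\<^sup>+ z. ennreal (std_normal_density z) * indicator {x<..y} z \<partial>lborel)"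
    by (intro nn_integral_mono) (auto simp: lb indicator_def)
  also have "\<dots> = emeasure NN {x<..y}"
    by (subst emeasure_density) auto
  finally have "c * (y - x) \<le> measure NN {x<..y}"
    by (simp add: NN.emeasure_eq_measure)
  moreover have "0 < c * (y - x)" using cpos assms by simp
  ultimately have "0 < measure NN {x<..y}" by linarith
  then show ?thesis using NN.cdf_diff_eq[OF assms] unfolding Phi_cdf by linarith
qed

lemma Phi_mono_iff: "Phi x < Phi y \<longleftrightarrow> x < y"
  by (metis Phi_strict linorder_neqE_linordered_idom order_less_asym order_less_irrefl)

lemma Phi_le_iff: "Phi x \<le> Phi y \<longleftrightarrow> x \<le> y"
  by (meson Phi_mono_iff not_less)

lemma Phi_inj: "Phi x = Phi y \<longleftrightarrow> x = y"
  by (metis Phi_le_iff order_antisym order_refl)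

lemma Phi_surj: assumes "0 < q" "q < 1" shows "\<exists>x. Phi x = q"
proof -
  have "eventually (\<lambda>x. Phi x < q) at_bot"
    using order_tendstoD(2)[OF NN.cdf_lim_at_bot assms(1)] unfolding Phi_cdf .
  then obtain a where a: "Phi a < q" by (auto simp: eventually_at_bot_linorder)
  have "eventually (\<lambda>x. q < Phi x) at_top"
    using order_tendstoD(1)[OF NN.cdf_lim_at_top_prob assms(2)] unfolding Phi_cdf .
  then obtain b where b: "q < Phi b" by (auto simp: eventually_at_top_linorder)
  have "a \<le> b" using a b Phi_le_iff by (meson less_trans not_le order_less_imp_le)
  moreover have "continuous_on {a..b} Phi"
    using Phi_cont by (simp add: continuous_at_imp_continuous_on)
  ultimately show ?thesis using IVT'[of Phi a q b] a b by auto
qed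

definition hh :: "real \<Rightarrow> real" where "hh q = (THE x. Phi x = 1 - q)"

lemma hh: assumes "0 < q" "q < 1" shows "Phi (hh q) = 1 - q"
proof -
  obtain x where "Phi x = 1 - q" using Phi_surj[of "1 - q"] assms by auto
  then show ?thesis unfolding hh_def by (rule theI) (use \<open>Phi x = 1 - q\<close> Phi_inj in metis)
qed

lemma Phi_inv_hh: assumes "0 < q" "q < 1" shows "Phi_inv (1 - q) = ereal (hh q)"
  using assms by (simp add: Phi_inv_def hh_def)

lemma hh_gt_iff: assumes "0 < q" "q < 1" shows "t < hh q \<longleftrightarrow> Phi t < 1 - q"
  using hh[OF assms] Phi_mono_iff by metis

lemma layer_cake:
  fixes g :: "'a \<Rightarrow> real"
  assumes sf: "sigma_finite_measure M" and g[measurable]: "g \<in> borel_measurable M" and nn: "\<And>x. 0 \<le> g x"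
  shows "(\<integral>\<^sup>+x. ennreal (g x) \<partial>M) = (\<integral>\<^sup>+s. emeasure M {x\<in>space M. s < g x} * indicator {0<..} s \<partial>lborel)"
proof -
  interpret sigma_finite_measure M by (rule sf)
  interpret P: pair_sigma_finite M lborel ..
  define f where "f x s = (if 0 < s \<and> s < g x then 1 else (0::ennreal))" for x s
  have fm: "case_prod f \<in> borel_measurable (M \<Otimes>\<^sub>M lborel)"
    unfolding f_def by measurable
  have "(\<integral>\<^sup>+x. ennreal (g x) \<partial>M) = (\<integral>\<^sup>+x. (\<integral>\<^sup>+s. f x s \<partial>lborel) \<partial>M)"
  proof (intro nn_integral_cong)
    fix x
    have "(\<integral>\<^sup>+s. f x s \<partial>lborel) = (\<integral>\<^sup>+s. indicator {0<..<g x} s \<partial>lborel)"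
      by (intro nn_integral_cong) (auto simp: f_def indicator_def)
    also have "\<dots> = ennreal (g x)" using nn[of x] by (simp add: emeasure_lborel_Ioo)
    finally show "ennreal (g x) = (\<integral>\<^sup>+s. f x s \<partial>lborel)" by simp
  qed
  also have "\<dots> = (\<integral>\<^sup>+s. (\<integral>\<^sup>+x. f x s \<partial>M) \<partial>lborel)"
    using P.Fubini'[OF fm] by simp
  also have "\<dots> = (\<integral>\<^sup>+s. emeasure M {x\<in>space M. s < g x} * indicator {0<..} s \<partial>lborel)"
  proof (intro nn_integral_cong)
    fix s :: real
    show "(\<integral>\<^sup>+x. f x s \<partial>M) = emeasure M {x\<in>space M. s < g x} * indicator {0<..} s"
    proof (cases "0 < s")
      case True
      have "(\<integral>\<^sup>+x. f x s \<partial>M) = (\<integral>\<^sup>+x. indicator {x\<in>space M. s < g x} x \<partial>M)"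
        using True by (intro nn_integral_cong) (auto simp: f_def indicator_def)
      also have "\<dots> = emeasure M {x\<in>space M. s < g x}"
        by (intro nn_integral_indicator) measurable
      finally show ?thesis using True by simp
    next
      case False
      then show ?thesis by (simp add: f_def)
    qed
  qed
  finally show ?thesis .
qed

lemma normal_mgf:
  fixes l :: real
  shows "(\<integral>\<^sup>+z. ennreal (exp (l * z - l\<^sup>2 / 2)) \<partial>NN) = 1"
proof -
  have "(\<integral>\<^sup>+z. ennreal (exp (l * z - l\<^sup>2 / 2)) \<partial>NN)
      = (\<integral>\<^sup>+z. ennreal (std_normal_density z) * ennreal (exp (l * z - l\<^sup>2 / 2)) \<partial>lborel)"
    by (subst nn_integral_density) auto
  also have "\<dots> = (\<integral>\<^sup>+z. ennreal (normal_density l 1 z) \<partial>lborel)"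
  proof (intro nn_integral_cong)
    fix z :: real
    have "std_normal_density z * exp (l * z - l\<^sup>2 / 2) = normal_density l 1 z"
      unfolding normal_density_def
      by (simp add: mult_exp_exp power2_eq_square field_simps)
    then show "ennreal (std_normal_density z) * ennreal (exp (l * z - l\<^sup>2 / 2)) = ennreal (normal_density l 1 z)"
      by (simp add: ennreal_mult[symmetric])
  qed
  also have "\<dots> = emeasure (density lborel (normal_density l 1)) UNIV"
    by (subst emeasure_density) auto
  also have "\<dots> = 1"
    using prob_space.emeasure_space_1[OF prob_space_normal_density[where \<mu>=l and \<sigma>=1]] by simp
  finally show ?thesis .
qed

lemma hh_antimono: assumes "0 < q1" "q1 \<le> q2" "q2 < 1" shows "hh q2 \<le> hh q1"
proof -
  have "Phi (hh q2) \<le> Phi (hh q1)" using hh[of q1] hh[of q2] assms by simp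
  then show ?thesis by (simp add: Phi_le_iff)
qed

definition FF :: "real \<Rightarrow> real \<Rightarrow> real" where
  "FF l q = (if 0 < q \<and> q < 1 then exp (l * hh q - l\<^sup>2 / 2) else 0)"

lemma FF_nonneg: "0 \<le> FF l q" by (simp add: FF_def)

lemma FF_measurable[measurable]: "FF l \<in> borel_measurable borel"
proof -
  have "mono_on {0<..<1} (\<lambda>q. - hh q)"
    by (auto intro!: mono_onI hh_antimono)
  then have m: "(\<lambda>q. - hh q) \<in> borel_measurable (restrict_space borel {0<..<1})"
    by (rule borel_measurable_mono_on_fnc)
  have "(\<lambda>q. exp (l * - (- hh q) - l\<^sup>2 / 2)) \<in> borel_measurable (restrict_space borel {0<..<1})"
    using m by measurable
  then have "(\<lambda>q. if q \<in> {0<..<1} then exp (l * - (- hh q) - l\<^sup>2 / 2) else 0) \<in> borel_measurable borel"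
    by (subst measurable_restrict_space_iff[symmetric]) auto
  then show ?thesis
    by (rule measurable_cong[THEN iffD1, rotated]) (auto simp: FF_def)
qed

lemma (in prob_space) FF_expectation:
  fixes X :: "'a \<Rightarrow> real" and l :: real
  assumes X[measurable]: "X \<in> borel_measurable M" and l: "0 < l"
    and sup: "\<And>t. t \<in> {0..1} \<Longrightarrow> measure M {x \<in> space M. X x \<le> t} \<le> t"
  shows "(\<integral>\<^sup>+x. ennreal (FF l (X x)) \<partial>M) \<le> 1"
proof -
  have sfM: "sigma_finite_measure M" by unfold_locales
  have sfN: "sigma_finite_measure NN" by unfold_locales
  have "(\<integral>\<^sup>+x. ennreal (FF l (X x)) \<partial>M)
      = (\<integral>\<^sup>+s. emeasure M {x\<in>space M. s < FF l (X x)} * indicator {0<..} s \<partial>lborel)"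
    by (rule layer_cake[OF sfM]) (auto simp: FF_nonneg)
  also have "\<dots> \<le> (\<integral>\<^sup>+s. emeasure NN {z\<in>space NN. s < exp (l * z - l\<^sup>2 / 2)} * indicator {0<..} s \<partial>lborel)"
  proof (intro nn_integral_mono)
    fix s :: real
    show "emeasure M {x\<in>space M. s < FF l (X x)} * indicator {0<..} s
        \<le> emeasure NN {z\<in>space NN. s < exp (l * z - l\<^sup>2 / 2)} * indicator {0<..} s"
    proof (cases "0 < s")
      case False then show ?thesis by simp
    next
      case True
      define t where "t = (ln s + l\<^sup>2 / 2) / l"
      have iff: "s < exp (l * z - l\<^sup>2 / 2) \<longleftrightarrow> t < z" for z
      proof -
        have "s < exp (l * z - l\<^sup>2 / 2) \<longleftrightarrow> ln s < l * z - l\<^sup>2 / 2"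
          using True by (metis exp_less_cancel_iff exp_ln)
        also have "\<dots> \<longleftrightarrow> t < z" using l unfolding t_def by (simp add: field_simps)
        finally show ?thesis .
      qed
      have R: "emeasure NN {z\<in>space NN. s < exp (l * z - l\<^sup>2 / 2)} = ennreal (1 - Phi t)"
      proof -
        have "{z\<in>space NN. s < exp (l * z - l\<^sup>2 / 2)} = {t<..}" using iff by auto
        then show ?thesis by (simp add: Phi_compl NN.emeasure_eq_measure)
      qed
      have sub: "{x\<in>space M. s < FF l (X x)} \<subseteq> {x\<in>space M. X x \<le> 1 - Phi t}"
      proof safe
        fix x assume x: "x \<in> space M" "s < FF l (X x)"
        then have q: "0 < X x" "X x < 1" using True by (auto simp: FF_def split: if_splits)
        then have "s < exp (l * hh (X x) - l\<^sup>2 / 2)" using x by (simp add: FF_def)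
        then have "t < hh (X x)" using iff by simp
        then have "Phi t < 1 - X x" using hh_gt_iff[OF q] by simp
        then show "X x \<le> 1 - Phi t" by simp
      qed
      have "emeasure M {x\<in>space M. s < FF l (X x)} \<le> emeasure M {x\<in>space M. X x \<le> 1 - Phi t}"
        by (intro emeasure_mono sub) measurable
      also have "\<dots> = ennreal (measure M {x\<in>space M. X x \<le> 1 - Phi t})"
        by (simp add: emeasure_eq_measure)
      also have "\<dots> \<le> ennreal (1 - Phi t)"
        using sup[of "1 - Phi t"] Phi_bounds[of t] by (intro ennreal_leI) auto
      finally show ?thesis using R True by simp
    qed
  qed
  also have "\<dots> = (\<integral>\<^sup>+z. ennreal (exp (l * z - l\<^sup>2 / 2)) \<partial>NN)"
    by (rule layer_cake[OF sfN, symmetric]) auto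
  also have "\<dots> = 1" by (rule normal_mgf)
  finally show ?thesis .
qed

lemma (in prob_space) indep_var_nn_integral:
  fixes X Y :: "'a \<Rightarrow> ennreal"
  assumes "indep_var borel X borel Y"
  shows "(\<integral>\<^sup>+\<omega>. X \<omega> * Y \<omega> \<partial>M) = (\<integral>\<^sup>+\<omega>. X \<omega> \<partial>M) * (\<integral>\<^sup>+\<omega>. Y \<omega> \<partial>M)"
proof -
  have *: "(\<lambda>\<omega>. X \<omega> * Y \<omega>) = (\<lambda>\<omega>. \<Prod>i\<in>UNIV. (case_bool X Y i \<omega>))"
    by (simp add: UNIV_bool mult.commute)
  have **: "(\<lambda> _. borel) = case_bool borel borel"
    by (rule ext, metis (full_types) bool.simps(3) bool.simps(4))
  have ind: "indep_vars (\<lambda>_. borel) (case_bool X Y) UNIV"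
    using assms unfolding indep_var_def by (subst **)
  show ?thesis
    unfolding * by (subst indep_vars_nn_integral[OF _ ind]) (auto simp: UNIV_bool mult.commute)
qed

lemma (in prob_space) maximal_ineq:
  fixes p :: "nat \<Rightarrow> 'a \<Rightarrow> real" and F :: "real \<Rightarrow> real" and c :: ennreal
  assumes indep: "indep_vars (\<lambda>_. borel) p {1..N}"
    and Fm[measurable]: "F \<in> borel_measurable borel"
    and EF: "\<And>i. i \<in> {1..N} \<Longrightarrow> (\<integral>\<^sup>+x. ennreal (F (p i x)) \<partial>M) \<le> 1"
    and c: "0 < c"
  shows "c * emeasure M {x\<in>space M. \<exists>k\<in>{1..N}. c \<le> (\<Prod>i\<in>{1..k}. ennreal (F (p i x)))} \<le> 1"
proof -
  have pm: "p i \<in> borel_measurable M" if "i \<in> {1..N}" for i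
    using indep that unfolding indep_vars_def by auto
  define P where "P x k = (\<Prod>i\<in>{1..k}. ennreal (F (p i x)))" for x k
  define A where "A x k = (\<forall>j\<in>{1..k}. P x j < c)" for x k
  define T where "T x j = (if A x (j - 1) \<and> c \<le> P x j then P x j else 0)" for x j
  define G where "G x k = (\<Sum>j\<in>{1..k}. T x j) + (if A x k then P x k else 0)" for x k
  have Pm: "(\<lambda>x. P x k) \<in> borel_measurable M" if "k \<le> N" for k
    unfolding P_def
    by (intro borel_measurable_prod_ennreal measurable_compose[OF _ measurable_ennreal]
          measurable_compose[OF _ Fm] pm) (use that in auto)
  have Am: "Measurable.pred M (\<lambda>x. A x k)" if "k \<le> N" for k
    unfolding A_def
  proof (intro pred_intros_finite)
    fix j assume "j \<in> {1..k}"
    then have [measurable]: "(\<lambda>x. P x j) \<in> borel_measurable M" using Pm that by auto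
    show "Measurable.pred M (\<lambda>x. P x j < c)" by measurable
  qed simp
  have Tm: "(\<lambda>x. T x j) \<in> borel_measurable M" if "j \<le> N" for j
  proof -
    have [measurable]: "(\<lambda>x. P x j) \<in> borel_measurable M" using Pm that by auto
    have [measurable]: "Measurable.pred M (\<lambda>x. A x (j - 1))" using Am that by auto
    show ?thesis unfolding T_def by measurable
  qed
  have Gm: "(\<lambda>x. G x k) \<in> borel_measurable M" if "k \<le> N" for k
  proof -
    have [measurable]: "(\<lambda>x. P x k) \<in> borel_measurable M" using Pm that by auto
    have [measurable]: "Measurable.pred M (\<lambda>x. A x k)" using Am that by auto
    have [measurable]: "(\<lambda>x. \<Sum>j\<in>{1..k}. T x j) \<in> borel_measurable M"
      by (intro borel_measurable_sum Tm) (use that in auto)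
    show ?thesis unfolding G_def by measurable
  qed
  have step: "(\<integral>\<^sup>+x. G x (Suc k) \<partial>M) \<le> (\<integral>\<^sup>+x. G x k \<partial>M)" if k: "Suc k \<le> N" for k
  proof -
    define S where "S x = (\<Sum>j\<in>{1..k}. T x j)" for x
    define Q where "Q x = (if A x k then P x k else 0)" for x
    have PS: "P x (Suc k) = P x k * ennreal (F (p (Suc k) x))" for x
      unfolding P_def by (simp add: prod.nat_ivl_Suc' mult.commute)
    have AS: "A x (Suc k) \<longleftrightarrow> A x k \<and> P x (Suc k) < c" for x
    proof -
      have "{1..Suc k} = insert (Suc k) {1..k}" by auto
      then show ?thesis unfolding A_def by auto
    qed
    have G1: "G x (Suc k) = S x + Q x * ennreal (F (p (Suc k) x))" for x
      unfolding G_def S_def Q_def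
      by (simp add: sum.nat_ivl_Suc' AS T_def PS[symmetric] not_le add.assoc)
         (metis (full_types) add.commute add.right_neutral linorder_not_le not_le_imp_less)
    have G0: "G x k = S x + Q x" for x unfolding G_def S_def Q_def by simp
    have Sm[measurable]: "S \<in> borel_measurable M"
      unfolding S_def by (intro borel_measurable_sum Tm) (use k in auto)
    have [measurable]: "(\<lambda>x. P x k) \<in> borel_measurable M" using Pm k by auto
    have [measurable]: "Measurable.pred M (\<lambda>x. A x k)" using Am k by auto
    have Qm[measurable]: "Q \<in> borel_measurable M" unfolding Q_def by measurable
    have pSk[measurable]: "p (Suc k) \<in> borel_measurable M" using pm k by auto
    define Y1 where "Y1 \<omega> = (if (\<forall>j\<in>{1..k}. (\<Prod>i\<in>{1..j}. ennreal (F (\<omega> i))) < c)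
                       then (\<Prod>i\<in>{1..k}. ennreal (F (\<omega> i))) else 0)" for \<omega> :: "nat \<Rightarrow> real"
    define Y2 where "Y2 \<omega> = ennreal (F (\<omega> (Suc k)))" for \<omega> :: "nat \<Rightarrow> real"
    have iv: "indep_var (PiM {1..k} (\<lambda>_. borel)) (\<lambda>x. restrict (\<lambda>i. p i x) {1..k})
                        (PiM {Suc k} (\<lambda>_. borel)) (\<lambda>x. restrict (\<lambda>i. p i x) {Suc k})"
      by (rule indep_var_restrict[OF indep]) (use k in auto)
    have cm: "(\<lambda>\<omega>. \<omega> i) \<in> borel_measurable (PiM S (\<lambda>_. borel))" if "i \<in> S" for i and S :: "nat set"
      using that by (rule measurable_component_singleton)
    have Y1m: "Y1 \<in> borel_measurable (PiM {1..k} (\<lambda>_. borel))"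
    proof -
      have pr: "(\<lambda>\<omega>. \<Prod>i\<in>{1..j}. ennreal (F (\<omega> i))) \<in> borel_measurable (PiM {1..k} (\<lambda>_. borel))"
        if "j \<le> k" for j
        by (intro borel_measurable_prod_ennreal measurable_compose[OF _ measurable_ennreal]
          measurable_compose[OF _ Fm] cm) (use that in auto)
      have [measurable]: "Measurable.pred (PiM {1..k} (\<lambda>_. borel))
          (\<lambda>\<omega>. \<forall>j\<in>{1..k}. (\<Prod>i\<in>{1..j}. ennreal (F (\<omega> i))) < c)"
      proof (intro pred_intros_finite)
        fix j assume "j \<in> {1..k}"
        then have [measurable]: "(\<lambda>\<omega>. \<Prod>i\<in>{1..j}. ennreal (F (\<omega> i))) \<in> borel_measurable (PiM {1..k} (\<lambda>_. borel))"
          using pr by auto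
        show "Measurable.pred (PiM {1..k} (\<lambda>_. borel)) (\<lambda>\<omega>. (\<Prod>i\<in>{1..j}. ennreal (F (\<omega> i))) < c)"
          by measurable
      qed simp
      have [measurable]: "(\<lambda>\<omega>. \<Prod>i\<in>{1..k}. ennreal (F (\<omega> i))) \<in> borel_measurable (PiM {1..k} (\<lambda>_. borel))"
        using pr by auto
      show ?thesis unfolding Y1_def by measurable
    qed
    have Y2m: "Y2 \<in> borel_measurable (PiM {Suc k} (\<lambda>_. borel))"
      unfolding Y2_def
      by (intro measurable_compose[OF _ measurable_ennreal] measurable_compose[OF _ Fm] cm) auto
    have iv2: "indep_var borel (Y1 \<circ> (\<lambda>x. restrict (\<lambda>i. p i x) {1..k})) borel (Y2 \<circ> (\<lambda>x. restrict (\<lambda>i. p i x) {Suc k}))"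
      by (rule indep_var_compose[OF iv Y1m Y2m])
    have e1: "(Y1 \<circ> (\<lambda>x. restrict (\<lambda>i. p i x) {1..k})) = Q"
    proof
      fix x
      have "(\<Prod>i\<in>{1..j}. ennreal (F (restrict (\<lambda>i. p i x) {1..k} i))) = P x j" if "j \<le> k" for j
        unfolding P_def by (intro prod.cong) (use that in auto)
      then show "(Y1 \<circ> (\<lambda>x. restrict (\<lambda>i. p i x) {1..k})) x = Q x"
        unfolding Y1_def Q_def A_def by auto
    qed
    have e2: "(Y2 \<circ> (\<lambda>x. restrict (\<lambda>i. p i x) {Suc k})) = (\<lambda>x. ennreal (F (p (Suc k) x)))"
      by (auto simp: Y2_def)
    have "(\<integral>\<^sup>+x. G x (Suc k) \<partial>M) = (\<integral>\<^sup>+x. S x \<partial>M) + (\<integral>\<^sup>+x. Q x * ennreal (F (p (Suc k) x)) \<partial>M)"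
      unfolding G1 by (rule nn_integral_add) measurable
    also have "(\<integral>\<^sup>+x. Q x * ennreal (F (p (Suc k) x)) \<partial>M)
        = (\<integral>\<^sup>+x. Q x \<partial>M) * (\<integral>\<^sup>+x. ennreal (F (p (Suc k) x)) \<partial>M)"
      using indep_var_nn_integral[OF iv2] unfolding e1 e2 by simp
    also have "\<dots> \<le> (\<integral>\<^sup>+x. Q x \<partial>M) * 1"
      by (intro mult_left_mono EF) (use k in auto)
    also have "(\<integral>\<^sup>+x. S x \<partial>M) + (\<integral>\<^sup>+x. Q x \<partial>M) * 1 = (\<integral>\<^sup>+x. G x k \<partial>M)"
      unfolding G0 by (simp add: nn_integral_add)
    finally show ?thesis by (simp add: add_left_mono)
  qed
  have bound: "k \<le> N \<Longrightarrow> (\<integral>\<^sup>+x. G x k \<partial>M) \<le> 1" for k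
  proof (induction k)
    case 0
    have "G x 0 = 1" for x by (simp add: G_def A_def P_def)
    then show ?case by (simp add: emeasure_space_1)
  next
    case (Suc k)
    then show ?case using step[of k] by (meson Suc_leD order_trans)
  qed
  define E where "E = {x\<in>space M. \<exists>k\<in>{1..N}. c \<le> (\<Prod>i\<in>{1..k}. ennreal (F (p i x)))}"
  have Em: "E \<in> sets M"
  proof -
    have "E = {x\<in>space M. \<exists>k\<in>{1..N}. c \<le> P x k}" unfolding E_def P_def by simp
    also have "\<dots> \<in> sets M"
    proof (intro predE pred_intros_finite)
      fix k assume "k \<in> {1..N}"
      then have [measurable]: "(\<lambda>x. P x k) \<in> borel_measurable M" using Pm by auto
      show "Measurable.pred M (\<lambda>x. c \<le> P x k)" by measurable
    qed simp
    finally show ?thesis .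
  qed
  have pw: "c * indicator E x \<le> G x N" for x
  proof (cases "x \<in> E")
    case False then show ?thesis by simp
  next
    case True
    then have ex: "\<exists>k. k \<in> {1..N} \<and> c \<le> P x k" unfolding E_def P_def by auto
    define j where "j = (LEAST k. k \<in> {1..N} \<and> c \<le> P x k)"
    have j: "j \<in> {1..N}" "c \<le> P x j" using LeastI_ex[OF ex] unfolding j_def by auto
    have "A x (j - 1)" unfolding A_def
    proof
      fix i assume i: "i \<in> {1..j - 1}"
      then have "i < j" by auto
      then have "\<not> (i \<in> {1..N} \<and> c \<le> P x i)" unfolding j_def by (rule not_less_Least)
      then show "P x i < c" using i j by auto
    qed
    then have "T x j = P x j" unfolding T_def using j by simp
    then have "c \<le> T x j" using j by simp
    also have "\<dots> \<le> (\<Sum>j\<in>{1..N}. T x j)" by (rule member_le_sum) (use j in auto)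
    also have "\<dots> \<le> G x N" unfolding G_def by simp
    finally show ?thesis using True by simp
  qed
  have "c * emeasure M E = (\<integral>\<^sup>+x. c * indicator E x \<partial>M)"
    using Em by (simp add: nn_integral_cmult_indicator)
  also have "\<dots> \<le> (\<integral>\<^sup>+x. G x N \<partial>M)" by (intro nn_integral_mono pw)
  also have "\<dots> \<le> 1" by (rule bound) simp
  finally show ?thesis unfolding E_def .
qed

lemma ereal_sum_Minfty:
  fixes f :: "nat \<Rightarrow> ereal"
  assumes "finite A" "\<forall>i\<in>A. f i \<noteq> \<infinity>" "\<exists>i\<in>A. f i = -\<infinity>"
  shows "sum f A = -\<infinity>"
  using assms
proof (induction A rule: finite_induct)
  case empty then show ?case by simp
next
  case (insert a A)
  show ?case
  proof (cases "f a = -\<infinity>")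
    case True
    have "sum f A \<noteq> \<infinity>" using insert by (simp add: sum_Pinfty)
    then show ?thesis using True insert by simp
  next
    case False
    then have "sum f A = -\<infinity>" using insert by auto
    moreover have "f a \<noteq> \<infinity>" using insert by auto
    ultimately show ?thesis using insert by simp
  qed
qed

lemma linear_identity:
  fixes ell m :: real and k :: nat
  assumes "0 < ell" "0 < m"
  defines "l \<equiv> sqrt (2 * ell / m)"
  shows "l * (sqrt (ell / (2 * m)) * real k + sqrt (m * ell / 2)) - real k * (l\<^sup>2 / 2) = ell"
proof -
  have a: "l * sqrt (ell / (2 * m)) = ell / m"
  proof -
    have "l * sqrt (ell / (2 * m)) = sqrt ((ell / m)\<^sup>2)"
      unfolding l_def real_sqrt_mult[symmetric] using assms by (simp add: power2_eq_square field_simps)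
    then show ?thesis using assms by simp
  qed
  have b: "l * sqrt (m * ell / 2) = ell"
  proof -
    have "l * sqrt (m * ell / 2) = sqrt (ell\<^sup>2)"
      unfolding l_def real_sqrt_mult[symmetric] using assms by (simp add: power2_eq_square field_simps)
    then show ?thesis using assms by simp
  qed
  have c: "l\<^sup>2 = 2 * ell / m" unfolding l_def using assms by simp
  have d: "l * (sqrt (ell / (2 * m)) * real k + sqrt (m * ell / 2))
      = (l * sqrt (ell / (2 * m))) * real k + l * sqrt (m * ell / 2)" by (simp add: algebra_simps)
  show ?thesis unfolding d a b c using assms by (simp add: field_simps)
qed

lemma (in prob_space) hit_set_measurable:
  fixes p :: "nat \<Rightarrow> 'a \<Rightarrow> real" and F :: "real \<Rightarrow> real" and c :: ennreal and K :: "nat set"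
  assumes "finite K" and pm: "\<And>i. i \<in> \<Union>((\<lambda>k. {1..k}) ` K) \<Longrightarrow> p i \<in> borel_measurable M"
    and Fm[measurable]: "F \<in> borel_measurable borel"
  shows "{x\<in>space M. \<exists>k\<in>K. c \<le> (\<Prod>i\<in>{1..k}. ennreal (F (p i x)))} \<in> sets M"
proof (intro predE pred_intros_finite)
  fix k assume k: "k \<in> K"
  have [measurable]: "(\<lambda>x. \<Prod>i\<in>{1..k}. ennreal (F (p i x))) \<in> borel_measurable M"
    by (intro borel_measurable_prod_ennreal measurable_compose[OF _ measurable_ennreal]
          measurable_compose[OF _ Fm] pm) (use k in auto)
  show "Measurable.pred M (\<lambda>x. c \<le> (\<Prod>i\<in>{1..k}. ennreal (F (p i x))))" by measurable
qed fact

lemma (in prob_space) linear_bound: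
  fixes p :: "nat \<Rightarrow> 'a \<Rightarrow> real" and I :: "nat set" and \<delta> m :: real
  assumes Istruct: "\<And>N. \<exists>N'. I \<inter> {1..N} = {1..N'}"
    and indep: "indep_vars (\<lambda>_. borel) p I"
    and range: "\<And>i x. i \<in> I \<Longrightarrow> x \<in> space M \<Longrightarrow> p i x \<in> {0..1}"
    and sup: "\<And>i t. i \<in> I \<Longrightarrow> t \<in> {0..1} \<Longrightarrow> measure M {x \<in> space M. p i x \<le> t} \<le> t"
    and \<delta>: "0 < \<delta>" "\<delta> < 1" and m: "0 < m"
  shows "\<exists>B\<in>sets M. {x\<in>space M. \<exists>k\<in>I. (\<Sum>i\<in>{1..k}. Phi_inv (1 - p i x)) \<ge> ereal (u_linear \<delta> m k)} \<subseteq> B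
            \<and> emeasure M B \<le> ennreal \<delta>"
proof -
  define ell where "ell = - ln \<delta>"
  have ell: "0 < ell" using \<delta> by (simp add: ell_def)
  define l where "l = sqrt (2 * ell / m)"
  have l: "0 < l" using ell m by (simp add: l_def)
  define c where "c = ennreal (1 / \<delta>)"
  have c: "0 < c" using \<delta> by (simp add: c_def)
  have pm: "p i \<in> borel_measurable M" if "i \<in> I" for i
    using indep that unfolding indep_vars_def by auto
  define EN where "EN N = {x\<in>space M. \<exists>k\<in>I \<inter> {1..N}. c \<le> (\<Prod>i\<in>{1..k}. ennreal (FF l (p i x)))}" for N
  define Null where "Null = (\<Union>i\<in>I. {x\<in>space M. p i x \<le> 0})"
  have sub1: "{1..k} \<subseteq> I" if "k \<in> I" for k
  proof -
    obtain N' where N': "I \<inter> {1..k} = {1..N'}" using Istruct by blast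
    show ?thesis
    proof (cases "k = 0")
      case False
      then have "k \<in> {1..N'}" using that N'[symmetric] by auto
      then show ?thesis using N' by auto
    qed simp
  qed
  have ENm: "EN N \<in> sets M" for N
  proof -
    obtain N' where N': "I \<inter> {1..N} = {1..N'}" using Istruct by blast
    show ?thesis unfolding EN_def N'
    proof (rule hit_set_measurable[where F="FF l" and p=p])
      have sN: "{1..N'} \<subseteq> I" using N' by auto
      fix i assume "i \<in> \<Union>((\<lambda>k. {1..k}) ` {1..N'})"
      then have "i \<in> I" using sN by auto
      then show "p i \<in> borel_measurable M" by (rule pm)
    qed auto
  qed
  have ENle: "emeasure M (EN N) \<le> ennreal \<delta>" for N
  proof -
    obtain N' where N': "I \<inter> {1..N} = {1..N'}" using Istruct by blast
    have sN: "{1..N'} \<subseteq> I" using N' by auto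
    have "c * emeasure M {x\<in>space M. \<exists>k\<in>{1..N'}. c \<le> (\<Prod>i\<in>{1..k}. ennreal (FF l (p i x)))} \<le> 1"
    proof (rule maximal_ineq[where F="FF l" and p=p])
      show "indep_vars (\<lambda>_. borel) p {1..N'}" using indep_vars_subset[OF indep sN] .
      fix i assume "i \<in> {1..N'}"
      then have i: "i \<in> I" using sN by auto
      show "(\<integral>\<^sup>+x. ennreal (FF l (p i x)) \<partial>M) \<le> 1"
        by (rule FF_expectation[OF pm[OF i] l sup[OF i]])
    qed (use c in auto)
    then have h: "c * emeasure M (EN N) \<le> 1" unfolding EN_def N' .
    have "emeasure M (EN N) = ennreal \<delta> * (c * emeasure M (EN N))"
      using \<delta> by (simp add: c_def mult.assoc[symmetric] ennreal_mult[symmetric])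
    also have "\<dots> \<le> ennreal \<delta> * 1" by (intro mult_left_mono h) auto
    finally show ?thesis by simp
  qed
  have Nullnull: "Null \<in> null_sets M"
    unfolding Null_def
  proof (rule null_sets_UN')
    fix i assume i: "i \<in> I"
    have s: "{x\<in>space M. p i x \<le> 0} \<in> sets M" using pm[OF i] by measurable
    have "measure M {x\<in>space M. p i x \<le> 0} \<le> 0" using sup[OF i, of 0] by simp
    then have "emeasure M {x\<in>space M. p i x \<le> 0} = 0"
      by (simp add: emeasure_eq_measure measure_nonneg antisym)
    then show "{x\<in>space M. p i x \<le> 0} \<in> null_sets M" using s by auto
  qed auto
  define B where "B = (\<Union>N. EN N) \<union> Null"
  have Bm: "B \<in> sets M" unfolding B_def using ENm Nullnull by auto
  have "emeasure M B \<le> emeasure M (\<Union>N. EN N) + emeasure M Null"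
    unfolding B_def by (rule emeasure_subadditive) (use ENm Nullnull in auto)
  also have "emeasure M Null = 0" using Nullnull by auto
  also have "emeasure M (\<Union>N. EN N) = (SUP N. emeasure M (EN N))"
    by (rule SUP_emeasure_incseq[symmetric]) (use ENm in \<open>auto simp: incseq_def EN_def\<close>)
  also have "\<dots> \<le> ennreal \<delta>" by (intro SUP_least ENle)
  finally have Ble: "emeasure M B \<le> ennreal \<delta>" by simp
  have incl: "x \<in> B" if x: "x \<in> space M" and k: "k \<in> I"
    and hit: "(\<Sum>i\<in>{1..k}. Phi_inv (1 - p i x)) \<ge> ereal (u_linear \<delta> m k)" for x k
  proof (cases "x \<in> Null")
    case True then show ?thesis by (simp add: B_def)
  next
    case False
    then have pos: "0 < p i x" if "i \<in> I" for i
      using that x unfolding Null_def by auto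
    have sk: "{1..k} \<subseteq> I" by (rule sub1[OF k])
    have posk: "0 < p i x" if "i \<in> {1..k}" for i using pos sk that by auto
    have le1: "p i x \<le> 1" if "i \<in> {1..k}" for i using range[of i x] sk that x by auto
    have lt1: "p i x < 1" if i: "i \<in> {1..k}" for i
    proof (rule ccontr)
      assume "\<not> p i x < 1"
      then have "p i x = 1" using le1[OF i] by simp
      then have "Phi_inv (1 - p i x) = -\<infinity>" by (simp add: Phi_inv_def)
      moreover have "\<forall>j\<in>{1..k}. Phi_inv (1 - p j x) \<noteq> \<infinity>"
        using pos sk by (auto simp: Phi_inv_def) (meson atLeastAtMost_iff not_less subsetD)
      ultimately have "(\<Sum>i\<in>{1..k}. Phi_inv (1 - p i x)) = -\<infinity>"
        using i by (intro ereal_sum_Minfty) auto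
      then show False using hit by simp
    qed
    have eq: "(\<Sum>i\<in>{1..k}. Phi_inv (1 - p i x)) = ereal (\<Sum>i\<in>{1..k}. hh (p i x))"
    proof -
      have "(\<Sum>i\<in>{1..k}. Phi_inv (1 - p i x)) = (\<Sum>i\<in>{1..k}. ereal (hh (p i x)))"
      proof (intro sum.cong refl)
        fix i assume i: "i \<in> {1..k}"
        then have "0 < p i x" using pos sk by auto
        then show "Phi_inv (1 - p i x) = ereal (hh (p i x))" using lt1[OF i] by (rule Phi_inv_hh)
      qed
      then show ?thesis by simp
    qed
    have ge: "u_linear \<delta> m k \<le> (\<Sum>i\<in>{1..k}. hh (p i x))" using hit unfolding eq by simp
    have "(\<Prod>i\<in>{1..k}. ennreal (FF l (p i x))) = ennreal (\<Prod>i\<in>{1..k}. exp (l * hh (p i x) - l\<^sup>2 / 2))"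
      using posk lt1 by (subst prod_ennreal) (auto simp: FF_def intro!: prod.cong)
    also have "(\<Prod>i\<in>{1..k}. exp (l * hh (p i x) - l\<^sup>2 / 2)) = exp (\<Sum>i\<in>{1..k}. l * hh (p i x) - l\<^sup>2 / 2)"
      by (simp add: exp_sum)
    also have "(\<Sum>i\<in>{1..k}. l * hh (p i x) - l\<^sup>2 / 2) = l * (\<Sum>i\<in>{1..k}. hh (p i x)) - real k * (l\<^sup>2 / 2)"
      by (simp add: sum_subtractf sum_distrib_left)
    finally have P: "(\<Prod>i\<in>{1..k}. ennreal (FF l (p i x))) = ennreal (exp (l * (\<Sum>i\<in>{1..k}. hh (p i x)) - real k * (l\<^sup>2 / 2)))" .
    have "ell = l * u_linear \<delta> m k - real k * (l\<^sup>2 / 2)"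
      unfolding u_linear_def l_def using linear_identity[OF ell m, of k]
      by (simp add: ell_def mult.commute)
    also have "\<dots> \<le> l * (\<Sum>i\<in>{1..k}. hh (p i x)) - real k * (l\<^sup>2 / 2)"
      using ge l by simp
    finally have "exp ell \<le> exp (l * (\<Sum>i\<in>{1..k}. hh (p i x)) - real k * (l\<^sup>2 / 2))" by simp
    moreover have "exp ell = 1 / \<delta>" using \<delta> by (simp add: ell_def exp_minus inverse_eq_divide)
    ultimately have "c \<le> (\<Prod>i\<in>{1..k}. ennreal (FF l (p i x)))"
      unfolding P c_def by (intro ennreal_leI) simp
    moreover have "k \<noteq> 0"
    proof
      assume "k = 0"
      then have "0 < u_linear \<delta> m k" using \<delta> m by (simp add: u_linear_def mult_pos_neg)
      then show False using ge \<open>k = 0\<close> by simp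
    qed
    ultimately have "x \<in> EN k" unfolding EN_def using x k by auto
    then show ?thesis unfolding B_def by auto
  qed
  show ?thesis using Bm Ble incl by blast
qed

lemma HH_ineq:
  fixes x h r :: real
  assumes r: "0 < r" and h: "0 \<le> h" and hx: "h < x"
  shows "2 * r * h * x powr (-(r+1)) \<le> (x - h) powr (-r) - (x + h) powr (-r)"
proof -
  have x: "0 < x" using h hx by simp
  define g where "g y = (x - y) powr (-r) - (x + y) powr (-r) - 2 * r * y * x powr (-(r+1))" for y
  define g' where "g' y = r * (x - y) powr (-(r+1)) + r * (x + y) powr (-(r+1)) - 2 * r * x powr (-(r+1))" for y
  have der: "(g has_real_derivative g' y) (at y)" if y: "y \<in> {0..h}" for y
  proof -
    have p1: "0 < x - y" "0 < x + y" using y hx x by auto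
    have d1: "((\<lambda>y. (x - y) powr (-r)) has_real_derivative (-r) * (x - y) powr (-r - of_nat 1) * (-1)) (at y)"
      by (rule DERIV_fun_powr) (use p1 in \<open>auto intro!: derivative_eq_intros\<close>)
    have d2: "((\<lambda>y. (x + y) powr (-r)) has_real_derivative (-r) * (x + y) powr (-r - of_nat 1) * 1) (at y)"
      by (rule DERIV_fun_powr) (use p1 in \<open>auto intro!: derivative_eq_intros\<close>)
    have d3: "((\<lambda>y. 2 * r * y * x powr (-(r+1))) has_real_derivative 2 * r * x powr (-(r+1))) (at y)"
      by (auto intro!: derivative_eq_intros)
    have "(g has_real_derivative ((-r) * (x - y) powr (-r - of_nat 1) * (-1) - (-r) * (x + y) powr (-r - of_nat 1) * 1 - 2 * r * x powr (-(r+1)))) (at y)"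
      unfolding g_def by (intro DERIV_diff d1 d2 d3)
    moreover have "(-r) * (x - y) powr (-r - of_nat 1) * (-1) - (-r) * (x + y) powr (-r - of_nat 1) * 1 - 2 * r * x powr (-(r+1)) = g' y"
    proof -
      have "-r - of_nat 1 = -(r+1)" by simp
      then show ?thesis unfolding g'_def by (simp only:)
    qed
    ultimately show ?thesis by simp
  qed
  have nn: "0 \<le> g' y" if y: "y \<in> {0..h}" for y
  proof -
    have p1: "0 < x - y" "0 < x + y" using y hx x by auto
    define a where "a = (x - y) powr (-(r+1))"
    define b where "b = (x + y) powr (-(r+1))"
    define X where "X = x powr (-(r+1))"
    have ab: "a * b = ((x - y) * (x + y)) powr (-(r+1))"
      unfolding a_def b_def using p1 by (simp add: powr_mult)
    have "(x * x) powr (-(r+1)) \<le> ((x - y) * (x + y)) powr (-(r+1))"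
    proof (rule powr_mono2')
      show "(x - y) * (x + y) \<le> x * x" by (simp add: algebra_simps)
    qed (use r p1 in auto)
    then have "X * X \<le> a * b" unfolding ab X_def using x by (simp add: powr_mult)
    moreover have "0 \<le> a" "0 \<le> b" "0 \<le> X" by (auto simp: a_def b_def X_def)
    ultimately have "(2 * X)\<^sup>2 \<le> (a + b)\<^sup>2"
    proof -
      assume XX: "X * X \<le> a * b"
      have e: "(a + b)\<^sup>2 = (a - b)\<^sup>2 + 4 * (a * b)" by (simp add: power2_eq_square algebra_simps)
      have "(2 * X)\<^sup>2 = 4 * (X * X)" by (simp add: power2_eq_square)
      also have "\<dots> \<le> 4 * (a * b)" using XX by simp
      also have "\<dots> \<le> (a + b)\<^sup>2" unfolding e by simp
      finally show ?thesis .
    qed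
    then have "2 * X \<le> a + b" by (rule power2_le_imp_le) (use \<open>0 \<le> a\<close> \<open>0 \<le> b\<close> in simp)
    then have "2 * r * X \<le> r * a + r * b" using r
      by (metis distrib_left mult.assoc mult.commute mult_le_cancel_left_pos)
    then show ?thesis unfolding g'_def a_def b_def X_def by simp
  qed
  have "g 0 \<le> g h"
    by (rule deriv_nonneg_imp_mono[of 0 h g g']) (use der nn h in auto)
  then show ?thesis unfolding g_def by simp
qed

definition yy :: "nat \<Rightarrow> real" where "yy j = 7/24 + 3/4 * real j"

definition wt :: "nat \<Rightarrow> real" where
  "wt j = (if j = 0 then 338/1000 else (60/91) * (yy j powr (-7/18) - yy (Suc j) powr (-7/18)))"

lemma yy_pos: "0 < yy j" by (simp add: yy_def)

lemma wt_pos: "0 < wt j"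
proof (cases "j = 0")
  case False
  have "yy (Suc j) powr (-7/18) < yy j powr (-7/18)"
    by (rule powr_less_mono2_neg) (auto simp: yy_def)
  then show ?thesis using False by (simp add: wt_def)
qed (simp add: wt_def)

lemma wt_sums: "wt sums (338/1000 + (60/91) * yy 1 powr (-7/18))"
proof -
  define f where "f j = yy (Suc j) powr (-7/18)" for j
  have lim: "f \<longlonglongrightarrow> 0"
    unfolding f_def
  proof (rule tendsto_neg_powr)
    show "filterlim (\<lambda>j. yy (Suc j)) at_top sequentially"
      unfolding yy_def
    proof (rule filterlim_tendsto_add_at_top[OF tendsto_const])
      show "filterlim (\<lambda>j. 3/4 * real (Suc j)) at_top sequentially"
      proof (rule filterlim_tendsto_pos_mult_at_top[OF tendsto_const])
        show "filterlim (\<lambda>j. real (Suc j)) at_top sequentially"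
          by (rule filterlim_compose[OF filterlim_real_sequentially filterlim_Suc])
      qed simp
    qed
  qed simp
  have "(\<lambda>j. (60/91) * (f j - f (Suc j))) sums ((60/91) * (f 0 - 0))"
    by (intro sums_mult telescope_sums' lim)
  moreover have "(\<lambda>j. wt (Suc j)) = (\<lambda>j. (60/91) * (f j - f (Suc j)))"
    by (simp add: wt_def f_def fun_eq_iff)
  ultimately have "(\<lambda>j. wt (Suc j)) sums ((60/91) * yy 1 powr (-7/18))"
    by (simp add: f_def)
  then show ?thesis by (subst (asm) sums_Suc_iff) (simp add: wt_def add.commute)
qed

lemma wt_sum_le: "suminf wt \<le> 1"
proof -
  have "yy 1 powr (-7/18) \<le> 1"
  proof -
    have "yy 1 powr (-7/18) \<le> 1 powr (-7/18)" by (rule powr_mono2') (auto simp: yy_def)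
    then show ?thesis by simp
  qed
  then have "338/1000 + (60/91) * yy 1 powr (-7/18) \<le> (1::real)" by simp
  then show ?thesis using sums_unique[OF wt_sums] by simp
qed

lemma wt_le1: "wt j \<le> 1"
proof -
  have "sum wt {j} \<le> suminf wt"
    using wt_sums wt_pos by (intro sum_le_suminf) (auto simp: sums_summable less_imp_le)
  then show ?thesis using wt_sum_le by simp
qed

lemma ln_eta: "3/4 \<le> ln (11/5 :: real)"
proof -
  have "ln (10/11 :: real) \<le> 10/11 - 1" by (rule ln_le_minus_one) simp
  moreover have "ln (10/11 :: real) = - ln (11/10)"
    by (simp add: ln_div)
  ultimately have a: "1/11 \<le> ln (11/10 :: real)" by simp
  have "ln (2 * (11/10) :: real) = ln 2 + ln (11/10)"
    by (rule ln_mult_pos) auto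
  then have "ln (11/5 :: real) = ln 2 + ln (11/10)" by simp
  then show ?thesis using a ln2_ge_two_thirds by simp
qed

lemma c_bound: "1 + (1 + 11/5) / (2 * sqrt (11/5)) \<le> (2.0808::real)"
proof -
  have s: "2961/2000 \<le> sqrt (11/5 :: real)" by (rule real_le_rsqrt) (simp add: power2_eq_square)
  have "(1 + 11/5) / (2 * sqrt (11/5)) \<le> (1 + 11/5) / (2 * (2961/2000::real))"
    by (rule divide_left_mono) (use s in auto)
  then show ?thesis by simp
qed

lemma powr_num: "(3/2::real) powr (25/18) \<le> 1.7576"
proof -
  have "((3/2::real) powr (25/18)) ^ 18 = (3/2) powr (25/18 * real 18)"
    by (subst powr_realpow[symmetric]) (auto simp: powr_powr)
  also have "\<dots> = (3/2) ^ 25" by (subst powr_realpow[symmetric]) auto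
  also have "\<dots> \<le> (1.7576::real) ^ 18" by (simp add: power_divide)
  finally have "((3/2::real) powr (25/18)) ^ 18 \<le> (1.7576::real) ^ 18" .
  then show ?thesis by (subst (asm) power_mono_iff) auto
qed

lemma wt_bound: "(ln 2 + real j * ln (11/5)) powr (-25/18) \<le> 5.2 * wt j"
proof (cases "j = 0")
  case True
  have "(ln 2 :: real) powr (-25/18) \<le> (2/3) powr (-25/18)"
    by (rule powr_mono2') (use ln2_ge_two_thirds in auto)
  also have "(2/3::real) powr (-25/18) = (3/2) powr (25/18)"
    by (simp add: powr_minus_divide powr_divide)
  also have "\<dots> \<le> 1.7576" by (rule powr_num)
  finally show ?thesis using True by (simp add: wt_def)
next
  case False
  define x where "x = 2/3 + 3/4 * real j"
  have x: "0 < x" by (simp add: x_def)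
  have "x \<le> ln 2 + real j * ln (11/5)"
  proof -
    have "real j * (3/4) \<le> real j * ln (11/5)" by (rule mult_left_mono) (use ln_eta in auto)
    then show ?thesis unfolding x_def using ln2_ge_two_thirds by simp
  qed
  then have "(ln 2 + real j * ln (11/5)) powr (-25/18) \<le> x powr (-25/18)"
    by (intro powr_mono2') (use x in auto)
  also have "x powr (-25/18) = (24/7) * (2 * (7/18) * (3/8) * x powr (-(7/18 + 1)))"
    by simp
  also have "\<dots> \<le> (24/7) * ((x - 3/8) powr (-(7/18)) - (x + 3/8) powr (-(7/18)))"
    by (intro mult_left_mono HH_ineq) (auto simp: x_def)
  also have "x - 3/8 = yy j" by (simp add: x_def yy_def)
  also have "x + 3/8 = yy (Suc j)" by (simp add: x_def yy_def field_simps)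
  also have "(24/7) * (yy j powr (-(7/18)) - yy (Suc j) powr (-(7/18))) = 5.2 * wt j"
    using False by (simp add: wt_def)
  finally show ?thesis .
qed

lemma curved_vs_linear:
  fixes \<alpha> :: real and k j :: nat
  assumes a: "0 < \<alpha>" "\<alpha> < 1" and kA: "(11/5)^j \<le> real k" and kB: "real k \<le> (11/5)^(Suc j)"
  shows "u_linear (\<alpha> * wt j) ((11/5)^j * sqrt (11/5)) k \<le> u_curved \<alpha> k"
proof -
  define \<eta> :: real where "\<eta> = 11/5"
  define A where "A = \<eta>^j"
  define B where "B = \<eta>^(Suc j)"
  define m where "m = A * sqrt \<eta>"
  define w where "w = wt j"
  define \<delta> where "\<delta> = \<alpha> * w"
  define kk where "kk = real k"
  define c where "c = 1 + (1 + \<eta>) / (2 * sqrt \<eta>)"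
  define L where "L = - ln \<alpha>"
  define Lw where "Lw = - ln w"
  define ell where "ell = - ln \<delta>"
  have w: "0 < w" "w \<le> 1" using wt_pos wt_le1 by (auto simp: w_def)
  have L: "0 < L" using a by (simp add: L_def)
  have Lw: "0 \<le> Lw" using w by (simp add: Lw_def)
  have ell: "ell = L + Lw" using a w by (simp add: ell_def L_def Lw_def \<delta>_def ln_mult_pos)
  have A1: "1 \<le> A" by (simp add: A_def \<eta>_def)
  have BA: "B = A * \<eta>" by (simp add: A_def B_def)
  have kA': "A \<le> kk" "kk \<le> B" using kA kB by (simp_all add: A_def B_def kk_def \<eta>_def)
  have kpos: "0 < kk" using A1 kA' by simp
  have eta: "0 < \<eta>" by (simp add: \<eta>_def)
  have mpos: "0 < m" using A1 eta by (simp add: m_def)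
  have ellnn: "0 \<le> ell" using ell L Lw by simp
  define s where "s = sqrt (ell / (2 * m))"
  have s: "0 \<le> s" using ellnn mpos by (simp add: s_def)
  have sm: "sqrt (- m * ln \<delta> / 2) = s * m"
  proof -
    have "- m * ln \<delta> / 2 = (ell / (2 * m)) * m\<^sup>2" using mpos by (simp add: ell_def power2_eq_square field_simps)
    then have "sqrt (- m * ln \<delta> / 2) = sqrt (ell / (2 * m)) * sqrt (m\<^sup>2)"
      by (simp only: real_sqrt_mult)
    then show ?thesis using mpos by (simp add: s_def)
  qed
  have ulin: "u_linear \<delta> m k = s * (kk + m)"
    unfolding u_linear_def sm by (simp add: s_def ell_def kk_def algebra_simps)
  have ulin_nn: "0 \<le> u_linear \<delta> m k" unfolding ulin using s kpos mpos by simp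
  have mm: "m\<^sup>2 = A * B" using eta by (simp add: m_def BA power2_eq_square)
  have mA: "m * (1 + \<eta>) / sqrt \<eta> = A + B" using eta by (simp add: m_def BA field_simps)
  have quad: "(kk + m)\<^sup>2 \<le> 2 * m * c * kk"
  proof -
    have "(kk - A) * (kk - B) \<le> 0" using kA' by (simp add: mult_nonneg_nonpos)
    then have "kk\<^sup>2 + A * B \<le> kk * (A + B)" by (simp add: power2_eq_square algebra_simps)
    moreover have "2 * m * c * kk = 2 * m * kk + kk * (m * (1 + \<eta>) / sqrt \<eta>)"
      using eta mpos by (simp add: c_def field_simps)
    ultimately show ?thesis unfolding mA by (simp add: power2_eq_square mm[symmetric] algebra_simps)
  qed
  have sq: "(u_linear \<delta> m k)\<^sup>2 \<le> ell * c * kk"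
  proof -
    have "(u_linear \<delta> m k)\<^sup>2 = (ell / (2 * m)) * (kk + m)\<^sup>2"
      unfolding ulin using ellnn mpos by (simp add: s_def power_mult_distrib)
    also have "\<dots> \<le> (ell / (2 * m)) * (2 * m * c * kk)"
      by (intro mult_left_mono quad) (use ellnn mpos in simp)
    also have "\<dots> = ell * c * kk" using mpos by simp
    finally show ?thesis .
  qed
  define X where "X = ln 2 + real j * ln \<eta>"
  have Xpos: "0 < X" unfolding X_def \<eta>_def
    using ln2_ge_two_thirds ln_eta by (intro add_pos_nonneg) auto
  have Xle: "X \<le> ln (2 * kk)"
  proof -
    have "ln A = real j * ln \<eta>" using eta by (simp add: A_def ln_realpow)
    moreover have "ln A \<le> ln kk" using A1 kA' by simp
    ultimately show ?thesis using kpos by (simp add: X_def ln_mult_pos)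
  qed
  have wb: "X powr (-25/18) \<le> 5.2 * w" using wt_bound[of j] by (simp add: X_def w_def \<eta>_def)
  have "ln (X powr (-25/18)) \<le> ln (5.2 * w)"
    by (subst ln_le_cancel_iff) (use wb Xpos w in auto)
  moreover have "ln (X powr (-25/18)) = (-25/18) * ln X" using Xpos by (simp add: ln_powr)
  moreover have "ln (5.2 * w) = ln 5.2 + ln w" using w by (intro ln_mult_pos) auto
  ultimately have "-(25/18) * ln X \<le> ln 5.2 + ln w" by simp
  then have Lwb: "Lw \<le> ln 5.2 + (25/18) * ln X" by (simp add: Lw_def)
  have lnX: "ln X \<le> ln (ln (2 * kk))" using Xpos Xle by simp
  have cb: "c \<le> 2.0808" using c_bound by (simp add: c_def \<eta>_def)
  have "ln (5.2 / \<alpha>) = ln 5.2 - ln \<alpha>" using a by (intro ln_divide_pos) auto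
  then have l52: "ln (5.2 / \<alpha>) = ln 5.2 + L" by (simp add: L_def)
  have key: "ell * c \<le> 2.89 * (ln (ln (2 * kk)) + 0.72 * ln (5.2 / \<alpha>))"
  proof -
    have "ell * c \<le> ell * 2.0808" by (intro mult_left_mono cb ellnn)
    also have "\<dots> = 2.0808 * L + 2.0808 * Lw" by (simp add: ell algebra_simps)
    also have "\<dots> \<le> 2.0808 * L + 2.0808 * (ln 5.2 + (25/18) * ln X)" using Lwb by simp
    also have "\<dots> \<le> 2.0808 * L + 2.0808 * (ln 5.2 + (25/18) * ln (ln (2 * kk)))" using lnX by simp
    also have "2.0808 * L + 2.0808 * (ln 5.2 + (25/18) * ln (ln (2 * kk))) = 2.89 * (ln (ln (2 * kk)) + 0.72 * ln (5.2 / \<alpha>))"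
      unfolding l52 by (simp add: algebra_simps)
    finally show ?thesis .
  qed
  have "u_linear \<delta> m k = sqrt ((u_linear \<delta> m k)\<^sup>2)" using ulin_nn by simp
  also have "\<dots> \<le> sqrt (ell * c * kk)" by (rule real_sqrt_le_mono[OF sq])
  also have "\<dots> \<le> sqrt (2.89 * (ln (ln (2 * kk)) + 0.72 * ln (5.2 / \<alpha>)) * kk)"
    using key kpos by (simp add: mult_right_mono)
  also have "\<dots> = 1.7 * sqrt (kk * (ln (ln (2 * kk)) + 0.72 * ln (5.2 / \<alpha>)))"
  proof -
    define T where "T = ln (ln (2 * kk)) + 0.72 * ln (5.2 / \<alpha>)"
    have "2.89 * T * kk = (1.7::real)\<^sup>2 * (kk * T)" by (simp add: power2_eq_square)
    then have "sqrt (2.89 * T * kk) = sqrt ((1.7::real)\<^sup>2) * sqrt (kk * T)"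
      by (simp only: real_sqrt_mult)
    then show ?thesis unfolding T_def by simp
  qed
  also have "\<dots> = u_curved \<alpha> k" by (simp add: u_curved_def kk_def)
  finally show ?thesis by (simp add: \<delta>_def w_def m_def A_def \<eta>_def)
qed

lemma cover_epoch:
  fixes k :: nat assumes "1 \<le> k"
  shows "\<exists>j. (11/5::real)^j \<le> real k \<and> real k \<le> (11/5)^(Suc j)"
proof -
  define b :: real where "b = 11/5"
  define z where "z = \<lfloor>log b (real k)\<rfloor>"
  have b: "1 < b" by (simp add: b_def)
  have k: "0 < real k" "1 \<le> real k" using assms by auto
  have "b powr z \<le> real k \<and> real k < b powr (z + 1)"
    using floor_log_eq_powr_iff[OF k(1) b, of z] unfolding z_def by simp
  moreover have "0 \<le> log b (real k)" using b k by simp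
  then have z0: "0 \<le> z" by (simp add: z_def)
  define j where "j = nat z"
  have zj: "z = int j" using z0 by (simp add: j_def)
  have "b powr z = b ^ j" using b by (simp add: zj powr_realpow)
  moreover have "b powr (z + 1) = b ^ Suc j"
  proof -
    have e: "real_of_int (z + 1) = real (Suc j)" by (simp add: zj)
    show ?thesis unfolding e by (rule powr_realpow) (use b in simp)
  qed
  ultimately show ?thesis unfolding b_def by (intro exI[of _ j]) auto
qed

theorem theorem1:
  fixes M :: "'a measure" and p :: "nat \<Rightarrow> 'a \<Rightarrow> real"
    and I :: "nat set" and \<alpha> :: real and u :: "nat \<Rightarrow> real"
  assumes "prob_space M"
    and "0 < \<alpha>" "\<alpha> < 1"
    and "(\<exists>n::nat. I = {1..n}) \<or> I = {1..}"
    and "prob_space.indep_vars M (\<lambda>_. borel) p I"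
    and "\<And>i x. i \<in> I \<Longrightarrow> x \<in> space M \<Longrightarrow> p i x \<in> {0..1}"
    and "\<And>i t. i \<in> I \<Longrightarrow> t \<in> {0..1} \<Longrightarrow>
           measure M {x \<in> space M. p i x \<le> t} \<le> t"
    and "(\<exists>m>0. u = u_linear \<alpha> m) \<or> u = u_curved \<alpha>"
  shows "measure M {x \<in> space M. \<exists>k\<in>I.
            (\<Sum>i\<in>{1..k}. Phi_inv (1 - p i x)) \<ge> ereal (u k)} \<le> \<alpha>"
proof -
  interpret prob_space M by fact
  note indep = assms(5) and range = assms(6) and sup = assms(7)
  have Istruct: "\<exists>N'. I \<inter> {1..N} = {1..N'}" for N
    using assms(4)
  proof
    assume "\<exists>n. I = {1..n}"
    then obtain n where "I = {1..n}" by blast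
    then have "I \<inter> {1..N} = {1..min n N}" by auto
    then show ?thesis by blast
  next
    assume "I = {1..}"
    then have "I \<inter> {1..N} = {1..N}" by auto
    then show ?thesis by blast
  qed
  have I1: "1 \<le> k" if "k \<in> I" for k using assms(4) that by auto
  define E where "E = {x \<in> space M. \<exists>k\<in>I. (\<Sum>i\<in>{1..k}. Phi_inv (1 - p i x)) \<ge> ereal (u k)}"
  have main: "\<exists>B\<in>sets M. E \<subseteq> B \<and> emeasure M B \<le> ennreal \<alpha>"
    using assms(8)
  proof
    assume "\<exists>m>0. u = u_linear \<alpha> m"
    then obtain m where m: "0 < m" "u = u_linear \<alpha> m" by blast
    show ?thesis unfolding E_def m(2)
      by (rule linear_bound[OF Istruct indep range sup assms(2,3) m(1)])
  next
    assume uc: "u = u_curved \<alpha>"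
    define Ej where "Ej j = {x\<in>space M. \<exists>k\<in>I. (\<Sum>i\<in>{1..k}. Phi_inv (1 - p i x))
        \<ge> ereal (u_linear (\<alpha> * wt j) ((11/5)^j * sqrt (11/5)) k)}" for j
    have "\<forall>j. \<exists>B\<in>sets M. Ej j \<subseteq> B \<and> emeasure M B \<le> ennreal (\<alpha> * wt j)"
    proof
      fix j
      have aw: "\<alpha> * wt j \<le> \<alpha>" using assms(2) wt_le1[of j] by (simp add: mult_left_le)
      have d: "0 < \<alpha> * wt j" "\<alpha> * wt j < 1"
        using assms(2) wt_pos[of j] apply simp
        using aw assms(3) by linarith
      show "\<exists>B\<in>sets M. Ej j \<subseteq> B \<and> emeasure M B \<le> ennreal (\<alpha> * wt j)"
        unfolding Ej_def by (rule linear_bound[OF Istruct indep range sup d]) (auto intro!: mult_pos_pos)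
    qed
    then obtain B where B: "\<And>j. B j \<in> sets M" "\<And>j. Ej j \<subseteq> B j" "\<And>j. emeasure M (B j) \<le> ennreal (\<alpha> * wt j)"
      by metis
    have sub: "E \<subseteq> (\<Union>j. B j)"
    proof
      fix x assume "x \<in> E"
      then obtain k where x: "x \<in> space M" and k: "k \<in> I"
        and hit: "(\<Sum>i\<in>{1..k}. Phi_inv (1 - p i x)) \<ge> ereal (u_curved \<alpha> k)"
        unfolding E_def uc by blast
      obtain j where j: "(11/5::real)^j \<le> real k" "real k \<le> (11/5)^(Suc j)"
        using cover_epoch[OF I1[OF k]] by blast
      have "u_linear (\<alpha> * wt j) ((11/5)^j * sqrt (11/5)) k \<le> u_curved \<alpha> k"
        by (rule curved_vs_linear[OF assms(2,3) j])
      then have "x \<in> Ej j" using hit x k unfolding Ej_def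
        by (intro CollectI conjI bexI[of _ k]) (auto intro: order_trans[rotated])
      then show "x \<in> (\<Union>j. B j)" using B(2) by blast
    qed
    have "emeasure M (\<Union>j. B j) \<le> (\<Sum>j. emeasure M (B j))"
      by (rule emeasure_subadditive_countably) (use B in auto)
    also have "\<dots> \<le> (\<Sum>j. ennreal (\<alpha> * wt j))"
      by (intro suminf_le B(3)) auto
    also have "\<dots> = ennreal (\<Sum>j. \<alpha> * wt j)"
      using wt_sums assms(2) wt_pos
      by (intro suminf_ennreal2) (auto intro!: summable_mult sums_summable less_imp_le)
    also have "(\<Sum>j. \<alpha> * wt j) = \<alpha> * suminf wt"
      using wt_sums by (intro suminf_mult sums_summable) auto
    also have "\<dots> \<le> \<alpha>" using wt_sum_le assms(2) by (simp add: mult_left_le)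
    finally show ?thesis using sub B(1) by (intro bexI[of _ "\<Union>j. B j"]) (auto simp: ennreal_leI)
  qed
  show ?thesis
  proof (cases "E \<in> sets M")
    case True
    obtain B where B: "B \<in> sets M" "E \<subseteq> B" "emeasure M B \<le> ennreal \<alpha>" using main by blast
    have "measure M E \<le> measure M B" by (rule finite_measure_mono[OF B(2,1)])
    also have "measure M B \<le> \<alpha>" using B(3) assms(2) by (simp add: emeasure_eq_measure)
    finally show ?thesis unfolding E_def .
  next
    case False
    then have "measure M E = 0" by (rule measure_notin_sets)
    then show ?thesis using assms(2) unfolding E_def by simp
  qed
qed

end
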